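(* For all $m,n\in\mathbb{Z}$, with signs $\pm$ (depending on $m,n$ and the equation), $$X_{2m-n}S_{\lambda(m,n)}=\pm S_{\lambda(m+1,n)},\quad X_{2n-m}S_{\lambda(m+1,n)}=\pm S_{\lambda(m+1,n+1)},\quad X_{-m-n}S_{\lambda(m+1,n+1)}=\pm S_{\lambda(m,n)},$$ and $$X_{2n-m+1}S_{\lambda(m,n)}=\pm S_{\lambda(m,n+1)},\quad X_{2m-n-1}S_{\lambda(m,n+1)}=\pm S_{\lambda(m+1,n+1)},\quad X_{-m-n}S_{\lambda(m+1,n+1)}=\pm S_{\lambda(m,n)}.$$
   Context: Schur functions: for a partition $\lambda$ of length $l(\lambda)$, $S_\lambda(t)=\det(p_{\lambda_i-i+j}(t))_{1\le i,j\le l(\lambda)}$ in $t=(t_1,t_2,\ldots)$, where $\sum_{n\ge0}p_n(t)z^n=\exp(\sum_{k\ge1}t_kz^k)$, $p_n=0$ for $n<0$. Vertex operators $X_m$ ($m\in\mathbb{Z}$) acting on $\mathbb{C}[t_1,t_2,\ldots]$ are defined by $\sum_{m\in\mathbb{Z}}X_mz^m=\exp(\sum_{k\ge1}t_kz^k)\exp(-\sum_{k\ge1}\frac{z^{-k}}{k}\partial_{t_k})$. A Maya diagram is $M\subset\mathbb{Z}$ containing all sufficiently negative and no sufficiently large integers; writing $M=\{\cdots<m_3<m_2<m_1\}$, its partition is defined by $m_i-m_{i+1}=\lambda_i-\lambda_{i+1}+1$. With $D_l=\{k\in\mathbb{Z}:k<l\}$, $\lambda(m,n)$ is the partition of $M(m,n)=3D_m\cup(3D_n+1)\cup(3D_0+2)$.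 *)

theory Defs
  imports Complex_Main "HOL-Computational_Algebra.Formal_Power_Series"
    "HOL-Computational_Algebra.Polynomial"
    "Jordan_Normal_Form.Determinant"
begin

text \<open>Variables t = (t_1, t_2, ...) are modelled as t :: nat => complex, where
  t k is t_k for k >= 1 (the value t 0 is ignored).  Elements of C[t_1,t_2,...]
  are modelled by the polynomial functions they define.\<close>

type_synonym tfun = "(nat \<Rightarrow> complex) \<Rightarrow> complex"

definition tseries :: "(nat \<Rightarrow> complex) \<Rightarrow> complex fps" where
  "tseries t = Abs_fps (\<lambda>k. if k = 0 then 0 else t k)"

definition hp :: "int \<Rightarrow> tfun" where
  "hp n t = (if n < 0 then 0 else fps_nth (fps_exp 1 oo tseries t) (nat n))"

text \<open>Partitions as weakly decreasing lists of positive naturals;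
  part lam i is the (i+1)-th part (0 beyond the length).\<close>
definition is_partition :: "nat list \<Rightarrow> bool" where
  "is_partition lam \<longleftrightarrow> sorted_wrt (\<ge>) lam \<and> (\<forall>x\<in>set lam. 0 < x)"

definition part :: "nat list \<Rightarrow> nat \<Rightarrow> nat" where
  "part lam i = (if i < length lam then lam ! i else 0)"

definition schur :: "nat list \<Rightarrow> tfun" where
  "schur lam t = det (mat (length lam) (length lam)
       (\<lambda>(i, j). hp (int (lam ! i) - int i + int j) t))"

text \<open>Vertex operators: X(z) f = exp(sum t_k z^k) f(t - [z^{-1}]),
  where exp(-sum z^{-k}/k d/dt_k) acts as the shift t_k -> t_k - z^{-k}/k.
  Writing f(t - [w]) = sum_j c_j(t) w^j, the coefficient of z^m is
  X_m f = sum_{j>=0} p_{m+j}(t) c_j(t).\<close>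
definition tshift :: "(nat \<Rightarrow> complex) \<Rightarrow> complex \<Rightarrow> (nat \<Rightarrow> complex)" where
  "tshift t w = (\<lambda>k. if k = 0 then t 0 else t k - w ^ k / of_nat k)"

definition shift_poly :: "tfun \<Rightarrow> (nat \<Rightarrow> complex) \<Rightarrow> complex poly" where
  "shift_poly f t = (THE q. \<forall>w. poly q w = f (tshift t w))"

definition shift_coeff :: "tfun \<Rightarrow> nat \<Rightarrow> tfun" where
  "shift_coeff f j t = coeff (shift_poly f t) j"

definition vertexX :: "int \<Rightarrow> tfun \<Rightarrow> tfun" where
  "vertexX m f t = (\<Sum>j\<le>degree (shift_poly f t). hp (m + int j) t * shift_coeff f j t)"

text \<open>Maya diagrams: maya_seq M i is m_{i+1}, the (i+1)-th largest element.\<close>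
definition is_maya :: "int set \<Rightarrow> bool" where
  "is_maya M \<longleftrightarrow> (\<exists>a. \<forall>k<a. k \<in> M) \<and> (\<exists>b. \<forall>k\<in>M. k < b)"

fun maya_seq :: "int set \<Rightarrow> nat \<Rightarrow> int" where
  "maya_seq M 0 = Sup M"
| "maya_seq M (Suc i) = Sup {x \<in> M. x < maya_seq M i}"

definition maya_partition :: "int set \<Rightarrow> nat list" where
  "maya_partition M = (THE lam. is_partition lam \<and>
     (\<forall>i. maya_seq M i - maya_seq M (Suc i) = int (part lam i) - int (part lam (Suc i)) + 1))"

definition Dl :: "int \<Rightarrow> int set" where
  "Dl l = {k. k < l}"

definition Mmn :: "int \<Rightarrow> int \<Rightarrow> int set" where
  "Mmn m n = ((\<lambda>k. 3 * k) ` Dl m) \<union> ((\<lambda>k. 3 * k + 1) ` Dl n) \<union> ((\<lambda>k. 3 * k + 2) ` Dl 0)"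

definition lam_mn :: "int \<Rightarrow> int \<Rightarrow> nat list" where
  "lam_mn m n = maya_partition (Mmn m n)"

end

theory Submission
  imports Defs
begin

lemma fps_ode_unique:
  fixes F H D :: "complex fps"
  assumes "fps_deriv F = D * F" "fps_deriv H = D * H" "fps_nth F 0 = fps_nth H 0"
  shows "F = H"
proof -
  have "\<forall>k\<le>n. fps_nth F k = fps_nth H k" for n
  proof (induction n)
    case 0 then show ?case using assms(3) by simp
  next
    case (Suc n)
    have "of_nat (n+1) * fps_nth F (n+1) = fps_nth (D * F) n" using assms(1) fps_deriv_nth[of F n] by simp
    also have "\<dots> = (\<Sum>i=0..n. fps_nth D i * fps_nth F (n-i))" by (simp add: fps_mult_nth)
    also have "\<dots> = (\<Sum>i=0..n. fps_nth D i * fps_nth H (n-i))" using Suc.IH by (intro sum.cong) auto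
    also have "\<dots> = fps_nth (D * H) n" by (simp add: fps_mult_nth)
    also have "\<dots> = of_nat (n+1) * fps_nth H (n+1)" using assms(2) fps_deriv_nth[of H n] by simp
    finally have "fps_nth F (Suc n) = fps_nth H (Suc n)" by (simp del: of_nat_Suc)
    then show ?case using Suc.IH le_Suc_eq by auto
  qed
  then show ?thesis by (auto simp: fps_eq_iff)
qed

lemma deriv_exp_comp:
  fixes A :: "complex fps" assumes "fps_nth A 0 = 0"
  shows "fps_deriv (fps_exp 1 oo A) = fps_deriv A * (fps_exp 1 oo A)"
  using assms by (simp add: fps_compose_deriv fps_compose_mult_distrib mult.commute)

lemma tseries_shift:
  "tseries (tshift t w) = tseries t - Abs_fps (\<lambda>k. if k = 0 then 0 else w ^ k / of_nat k)"
  by (auto simp: tseries_def tshift_def fps_eq_iff)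

lemma derivB:
  "fps_deriv (Abs_fps (\<lambda>k. if k = 0 then 0 else (w::complex) ^ k / of_nat k)) * (1 - fps_const w * fps_X) = fps_const w"
proof -
  have "fps_deriv (Abs_fps (\<lambda>k. if k = 0 then 0 else (w::complex) ^ k / of_nat k)) = Abs_fps (\<lambda>n. w^(n+1))"
    by (auto simp: fps_eq_iff simp del: of_nat_Suc)
  moreover have "Q * (1 - fps_const w * fps_X) = Q - fps_const w * (fps_X * Q)" for Q :: "complex fps"
    by (simp add: algebra_simps)
  ultimately show ?thesis
    by (auto simp: fps_eq_iff power_eq_if)
qed

lemma exp_shift:
  "fps_exp 1 oo tseries (tshift t w) = (fps_exp 1 oo tseries t) * (1 - fps_const w * fps_X)"
proof -
  let ?B = "Abs_fps (\<lambda>k. if k = 0 then 0 else (w::complex) ^ k / of_nat k)"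
  let ?E = "fps_exp 1 oo tseries t"
  have t0: "fps_nth (tseries t) 0 = 0" "fps_nth (tseries (tshift t w)) 0 = 0" by (auto simp: tseries_def)
  have 1: "fps_deriv (fps_exp 1 oo tseries (tshift t w)) = fps_deriv (tseries (tshift t w)) * (fps_exp 1 oo tseries (tshift t w))"
    by (rule deriv_exp_comp[OF t0(2)])
  have "fps_deriv (?E * (1 - fps_const w * fps_X)) = fps_deriv (tseries t) * ?E * (1 - fps_const w * fps_X) - ?E * fps_const w"
    using deriv_exp_comp[OF t0(1)] by (simp add: algebra_simps)
  also have "\<dots> = fps_deriv (tseries t) * ?E * (1 - fps_const w * fps_X) - ?E * (fps_deriv ?B * (1 - fps_const w * fps_X))"
    by (simp add: derivB)
  also have "\<dots> = fps_deriv (tseries (tshift t w)) * (?E * (1 - fps_const w * fps_X))"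
    by (simp add: tseries_shift algebra_simps)
  finally have 2: "fps_deriv (?E * (1 - fps_const w * fps_X)) = fps_deriv (tseries (tshift t w)) * (?E * (1 - fps_const w * fps_X))" .
  have 3: "fps_nth (fps_exp 1 oo tseries (tshift t w)) 0 = fps_nth (?E * (1 - fps_const w * fps_X)) 0" by simp
  show ?thesis by (rule fps_ode_unique[OF 1 2 3])
qed

lemma hp_shift: "hp n (tshift t w) = hp n t - w * hp (n - 1) t"
proof -
  have "fps_nth ((fps_exp 1 oo tseries t) * (1 - fps_const w * fps_X)) k =
     fps_nth (fps_exp 1 oo tseries t) k - w * (if k = 0 then 0 else fps_nth (fps_exp 1 oo tseries t) (k - 1))" for k
    proof -
    have "(fps_exp 1 oo tseries t) * (1 - fps_const w * fps_X) = (fps_exp 1 oo tseries t) - fps_const w * (fps_X * (fps_exp 1 oo tseries t))"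
      by (simp add: algebra_simps)
    then show ?thesis by (simp only:) simp
  qed
  then show ?thesis unfolding hp_def exp_shift
    by (auto simp: nat_diff_distrib')
qed


definition Dmat :: "int list \<Rightarrow> (nat \<Rightarrow> complex) \<Rightarrow> complex mat" where
  "Dmat e t = mat (length e) (length e) (\<lambda>(i, j). hp (e ! i + int j) t)"

definition Dt :: "int list \<Rightarrow> tfun" where
  "Dt e t = det (Dmat e t)"

lemma Dmat_carrier: "Dmat e t \<in> carrier_mat (length e) (length e)"
  by (simp add: Dmat_def)

lemma Dmat_index: "i < length e \<Longrightarrow> j < length e \<Longrightarrow> Dmat e t $$ (i,j) = hp (e ! i + int j) t"
  by (simp add: Dmat_def)

lemma schur_Dt: "schur lam = Dt (map (\<lambda>i. int (lam ! i) - int i) [0..<length lam])"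
  unfolding schur_def Dt_def Dmat_def
  by (intro ext arg_cong[where f = det] cong_mat) auto

lemma hp_neg: "n < 0 \<Longrightarrow> hp n t = 0" by (simp add: hp_def)
lemma hp_0: "hp 0 t = 1" by (simp add: hp_def)

lemma Dt_pad: "Dt (e @ [- int (length e)]) = Dt e"
proof
  fix t
  let ?N = "length e"
  let ?A = "Dmat (e @ [- int ?N]) t"
  have A: "?A \<in> carrier_mat (Suc ?N) (Suc ?N)" using Dmat_carrier[of "e @ [- int ?N]" t] by simp
  have "det ?A = (\<Sum>j<Suc ?N. ?A $$ (?N, j) * cofactor ?A ?N j)"
    by (rule laplace_expansion_row[OF A]) simp
  also have "\<dots> = (\<Sum>j<Suc ?N. (if j = ?N then cofactor ?A ?N j else 0))"
  proof (intro sum.cong refl)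
    fix j assume j: "j \<in> {..<Suc ?N}"
    have "?A $$ (?N, j) = hp (- int ?N + int j) t" using j by (simp add: Dmat_index nth_append)
    also have "\<dots> = (if j = ?N then 1 else 0)" using j by (auto simp: hp_neg hp_0)
    finally show "?A $$ (?N, j) * cofactor ?A ?N j = (if j = ?N then cofactor ?A ?N j else 0)" by simp
  qed
  also have "\<dots> = cofactor ?A ?N ?N" by simp
  also have "\<dots> = det (mat_delete ?A ?N ?N)" by (simp add: cofactor_def)
  also have "mat_delete ?A ?N ?N = Dmat e t"
    by (rule eq_matI) (auto simp: mat_delete_def Dmat_def nth_append)
  finally show "Dt (e @ [- int (length e)]) t = Dt e t" by (simp add: Dt_def)
qed

lemma Dt_swap: "Dt (xs @ b # a # ys) t = - Dt (xs @ a # b # ys) t"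
proof -
  let ?i = "length xs"
  let ?n = "length (xs @ a # b # ys)"
  have "Dmat (xs @ b # a # ys) t = swaprows ?i (Suc ?i) (Dmat (xs @ a # b # ys) t)"
    by (rule eq_matI) (auto simp: Dmat_def nth_append nth_Cons' split: if_splits)
  then have "det (Dmat (xs @ b # a # ys) t) = - det (Dmat (xs @ a # b # ys) t)"
    using det_swaprows[of ?i ?n "Suc ?i" "Dmat (xs @ a # b # ys) t"] Dmat_carrier[of "xs @ a # b # ys" t] by simp
  then show "Dt (xs @ b # a # ys) t = - Dt (xs @ a # b # ys) t" by (simp add: Dt_def)
qed

lemma Dt_rotate: "Dt (pre @ x # xs @ ys) t = (-1) ^ length xs * Dt (pre @ xs @ x # ys) t"
proof (induction xs arbitrary: pre)
  case Nil then show ?case by simp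
next
  case (Cons y xs)
  have "Dt (pre @ x # (y # xs) @ ys) t = - Dt (pre @ y # x # xs @ ys) t"
    using Dt_swap[of pre x y "xs @ ys"] by simp
  also have "Dt (pre @ y # x # xs @ ys) t = Dt ((pre @ [y]) @ x # xs @ ys) t" by simp
  also have "\<dots> = (-1) ^ length xs * Dt ((pre @ [y]) @ xs @ x # ys) t" by (rule Cons.IH)
  finally show ?case by simp
qed


definition Rmat :: "(nat \<Rightarrow> complex) \<Rightarrow> int list \<Rightarrow> (nat \<Rightarrow> complex) \<Rightarrow> complex mat" where
  "Rmat r e t = mat (Suc (length e)) (Suc (length e))
     (\<lambda>(i, j). if i = 0 then r j else hp (e ! (i - 1) - 1 + int j) t)"

definition Cof :: "int list \<Rightarrow> nat \<Rightarrow> tfun" where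
  "Cof e j t = cofactor (Rmat (\<lambda>_. 0) e t) 0 j"

lemma Rmat_carrier: "Rmat r e t \<in> carrier_mat (Suc (length e)) (Suc (length e))"
  by (simp add: Rmat_def)

lemma Rmat_expand: "det (Rmat r e t) = (\<Sum>j<Suc (length e). r j * Cof e j t)"
proof -
  have "det (Rmat r e t) = (\<Sum>j<Suc (length e). Rmat r e t $$ (0, j) * cofactor (Rmat r e t) 0 j)"
    by (rule laplace_expansion_row[OF Rmat_carrier]) simp
  also have "\<dots> = (\<Sum>j<Suc (length e). r j * Cof e j t)"
  proof (intro sum.cong refl)
    fix j assume j: "j \<in> {..<Suc (length e)}"
    have "mat_delete (Rmat r e t) 0 j = mat_delete (Rmat (\<lambda>_. 0) e t) 0 j"
      unfolding mat_delete_def by (rule cong_mat) (auto simp: Rmat_def)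
    then show "Rmat r e t $$ (0, j) * cofactor (Rmat r e t) 0 j = r j * Cof e j t"
      using j by (simp add: Cof_def cofactor_def Rmat_def)
  qed
  finally show ?thesis .
qed

lemma Rmat_shift: "det (Rmat (\<lambda>j. w ^ j) e t) = Dt e (tshift t w)"
proof -
  let ?n = "Suc (length e)"
  let ?R = "Rmat (\<lambda>j. w ^ j) e t"
  define U :: "complex mat" where "U = mat ?n ?n (\<lambda>(i, j). (if i = j then 1 else 0) + (if Suc i = j then - w else 0))"
  have U: "U \<in> carrier_mat ?n ?n" by (simp add: U_def)
  have ut: "upper_triangular U" by (auto simp: upper_triangular_def U_def)
  have "det U = prod_list (diag_mat U)" by (rule det_upper_triangular[OF ut U])
  also have "\<dots> = (\<Prod> i = 0 ..< ?n. U $$ (i,i))" using prod_list_diag_prod[of U] U by simp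
  also have "\<dots> = 1" by (intro prod.neutral) (auto simp: U_def)
  finally have detU: "det U = 1" .
  have RU: "(?R * U) $$ (i, j) = ?R $$ (i, j) - (if j = 0 then 0 else w * ?R $$ (i, j - 1))"
    if i: "i < ?n" and j: "j < ?n" for i j
  proof -
    have "(?R * U) $$ (i, j) = (\<Sum>k\<in>{0..<?n}. ?R $$ (i, k) * U $$ (k, j))"
      using i j by (simp add: scalar_prod_def Rmat_def U_def)
    also have "\<dots> = (\<Sum>k\<in>{0..<?n}. (if k = j then ?R $$ (i, k) else 0))
                    + (\<Sum>k\<in>{0..<?n}. (if Suc k = j then - w * ?R $$ (i, k) else 0))"
      unfolding sum.distrib[symmetric] using j by (intro sum.cong refl) (auto simp: U_def)
    also have "(\<Sum>k\<in>{0..<?n}. (if k = j then ?R $$ (i, k) else 0)) = ?R $$ (i, j)"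
      using j by simp
    also have "(\<Sum>k\<in>{0..<?n}. (if Suc k = j then - w * ?R $$ (i, k) else 0))
        = (if j = 0 then 0 else - w * ?R $$ (i, j - 1))"
    proof (cases j)
      case 0 then show ?thesis by simp
    next
      case (Suc j')
      have "(\<Sum>k\<in>{0..<?n}. (if Suc k = j then - w * ?R $$ (i, k) else 0))
          = (\<Sum>k\<in>{0..<?n}. (if k = j' then - w * ?R $$ (i, k) else 0))"
        using Suc by (intro sum.cong refl) auto
      also have "\<dots> = - w * ?R $$ (i, j')" using Suc j by simp
      finally show ?thesis using Suc by simp
    qed
    finally show ?thesis by simp
  qed
  have "det (?R * U) = det ?R * det U" by (rule det_mult[OF Rmat_carrier U])
  then have "det ?R = det (?R * U)" using detU by simp
  also have "\<dots> = (\<Sum>j<?n. (?R * U) $$ (0, j) * cofactor (?R * U) 0 j)"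
    by (rule laplace_expansion_row) (use Rmat_carrier[of "\<lambda>j. w ^ j" e t] U in \<open>auto intro!: mult_carrier_mat\<close>)
  also have "\<dots> = (\<Sum>j<?n. (if j = 0 then cofactor (?R * U) 0 j else 0))"
  proof (intro sum.cong refl)
    fix j assume j: "j \<in> {..<?n}"
    have "(?R * U) $$ (0, j) = (if j = 0 then 1 else 0)"
      using j by (subst RU) (auto simp: Rmat_def power_eq_if)
    then show "(?R * U) $$ (0, j) * cofactor (?R * U) 0 j = (if j = 0 then cofactor (?R * U) 0 j else 0)"
      by simp
  qed
  also have "\<dots> = cofactor (?R * U) 0 0" by simp
  also have "\<dots> = det (mat_delete (?R * U) 0 0)" by (simp add: cofactor_def)
  also have "mat_delete (?R * U) 0 0 = Dmat e (tshift t w)"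
  proof (rule eq_matI)
    fix i j assume i: "i < dim_row (Dmat e (tshift t w))" and j: "j < dim_col (Dmat e (tshift t w))"
    then have i': "i < length e" and j': "j < length e" by (auto simp: Dmat_def)
    have "mat_delete (?R * U) 0 0 $$ (i, j) = (?R * U) $$ (Suc i, Suc j)"
      using i' j' U by (simp add: mat_delete_def Rmat_def)
    also have "\<dots> = hp (e ! i - 1 + int (Suc j)) t - w * hp (e ! i - 1 + int j) t"
      using i' j' by (subst RU) (auto simp: Rmat_def)
    also have "\<dots> = hp (e ! i + int j) (tshift t w)"
      by (simp add: hp_shift algebra_simps)
    also have "\<dots> = Dmat e (tshift t w) $$ (i, j)" using i' j' by (simp add: Dmat_def)
    finally show "mat_delete (?R * U) 0 0 $$ (i, j) = Dmat e (tshift t w) $$ (i, j)" .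
  qed (use U in \<open>auto simp: Dmat_def Rmat_def\<close>)
  finally show ?thesis by (simp add: Dt_def)
qed

lemma shift_poly_Dt: "shift_poly (Dt e) t = (\<Sum>j<Suc (length e). monom (Cof e j t) j)"
  unfolding shift_poly_def
proof (rule the_equality)
  show "\<forall>w. poly (\<Sum>j<Suc (length e). monom (Cof e j t) j) w = Dt e (tshift t w)"
    by (auto simp: poly_sum poly_monom Rmat_shift[symmetric] Rmat_expand mult.commute)
  fix q assume "\<forall>w. poly q w = Dt e (tshift t w)"
  then have "poly q = poly (\<Sum>j<Suc (length e). monom (Cof e j t) j)"
    by (auto simp: poly_sum poly_monom Rmat_shift[symmetric] Rmat_expand mult.commute)
  then show "q = (\<Sum>j<Suc (length e). monom (Cof e j t) j)" by (simp add: poly_eq_poly_eq_iff)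
qed

lemma vertex_Dt: "vertexX k (Dt e) = Dt (k # map (\<lambda>x. x - 1) e)"
proof
  fix t
  let ?q = "\<Sum>j<Suc (length e). monom (Cof e j t) j"
  have cq: "coeff ?q j = (if j < Suc (length e) then Cof e j t else 0)" for j
    by (simp only: coeff_sum coeff_monom sum.delta finite_lessThan lessThan_iff)
  have dq: "degree ?q \<le> length e"
    by (intro degree_le allI impI, subst cq) simp
  have "vertexX k (Dt e) t = (\<Sum>j\<le>degree ?q. hp (k + int j) t * coeff ?q j)"
    by (simp add: vertexX_def shift_coeff_def shift_poly_Dt)
  also have "\<dots> = (\<Sum>j<Suc (length e). hp (k + int j) t * coeff ?q j)"
  proof (rule sum.mono_neutral_left)
    show "\<forall>i\<in>{..<Suc (length e)} - {..degree ?q}. hp (k + int i) t * coeff ?q i = 0"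
      by (auto simp del: sum.lessThan_Suc intro: coeff_eq_0)
  qed (use dq in auto)
  also have "\<dots> = (\<Sum>j<Suc (length e). hp (k + int j) t * Cof e j t)"
    by (intro sum.cong refl, subst cq) simp
  also have "\<dots> = det (Rmat (\<lambda>j. hp (k + int j) t) e t)" by (simp add: Rmat_expand)
  also have "Rmat (\<lambda>j. hp (k + int j) t) e t = Dmat (k # map (\<lambda>x. x - 1) e) t"
    by (rule eq_matI) (auto simp: Rmat_def Dmat_def nth_Cons' algebra_simps)
  also have "det (Dmat (k # map (\<lambda>x. x - 1) e) t) = Dt (k # map (\<lambda>x. x - 1) e) t" by (simp add: Dt_def)
  finally show "vertexX k (Dt e) t = Dt (k # map (\<lambda>x. x - 1) e) t" .
qed


lemma int_Sup_mem:
  fixes X :: "int set" assumes "X \<noteq> {}" "bdd_above X"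
  shows "Sup X \<in> X" "\<And>y. y \<in> X \<Longrightarrow> y \<le> Sup X"
proof -
  show le: "\<And>y. y \<in> X \<Longrightarrow> y \<le> Sup X" using assms by (simp add: cSup_upper)
  show "Sup X \<in> X"
  proof (rule ccontr)
    assume "Sup X \<notin> X"
    then have "\<And>y. y \<in> X \<Longrightarrow> y \<le> Sup X - 1"
      using le by (metis int_one_le_iff_zero_less le_less zle_diff1_eq)
    then have "Sup X \<le> Sup X - 1" using assms(1) by (rule cSup_least[rotated])
    then show False by simp
  qed
qed

definition cnt :: "int set \<Rightarrow> int \<Rightarrow> nat" where
  "cnt M x = card {y \<in> M. x < y}"

lemma maya_fin: "is_maya M \<Longrightarrow> finite {y \<in> M. x < y}"
  unfolding is_maya_def
proof (elim conjE exE)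
  fix b assume "\<forall>k\<in>M. k < b"
  then have "{y \<in> M. x < y} \<subseteq> {x<..<b}" by auto
  then show "finite {y \<in> M. x < y}" by (rule finite_subset) simp
qed

lemma maya_bdd: assumes "is_maya M" shows "bdd_above {y \<in> M. P y}"
proof -
  obtain b where "\<forall>k\<in>M. k < b" using assms unfolding is_maya_def by blast
  then show ?thesis by (intro bdd_aboveI[of _ b]) auto
qed

lemma maya_below: assumes "is_maya M" shows "\<exists>k\<in>M. k < x"
proof -
  obtain a where "\<forall>k<a. k \<in> M" using assms unfolding is_maya_def by blast
  then show ?thesis by (intro bexI[of _ "min a x - 1"]) auto
qed

lemma cnt_mono_strict:
  assumes "is_maya M" "y \<in> M" "x < y" shows "cnt M y < cnt M x"
  unfolding cnt_def
  by (rule psubset_card_mono[OF maya_fin[OF assms(1)]]) (use assms in auto)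

lemma cnt_inj: assumes "is_maya M" "x \<in> M" "y \<in> M" "cnt M x = cnt M y" shows "x = y"
proof (rule ccontr)
  assume "x \<noteq> y"
  then consider "x < y" | "y < x" by linarith
  then show False
  proof cases
    case 1 then show False using cnt_mono_strict[OF assms(1) assms(3) 1] assms(4) by simp
  next
    case 2 then show False using cnt_mono_strict[OF assms(1) assms(2) 2] assms(4) by simp
  qed
qed

lemma maya_seq_char:
  assumes M: "is_maya M"
  shows "maya_seq M i \<in> M \<and> cnt M (maya_seq M i) = i \<and> maya_seq M (Suc i) < maya_seq M i"
proof (induction i)
  have ne: "M \<noteq> {}" using maya_below[OF M] by auto
  have bd: "bdd_above M" using maya_bdd[OF M, of "\<lambda>_. True"] by simp
  have s0: "maya_seq M 0 \<in> M" using int_Sup_mem[OF ne bd] by simp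
  have E0: "{y \<in> M. maya_seq M 0 < y} = {}"
    using int_Sup_mem(2)[OF ne bd] by force
  have c0: "cnt M (maya_seq M 0) = 0" by (simp only: cnt_def E0 card.empty)
  {
    fix i assume si: "maya_seq M i \<in> M" and ci: "cnt M (maya_seq M i) = i"
    let ?s = "maya_seq M i"
    let ?S = "{x \<in> M. x < ?s}"
    have ne': "?S \<noteq> {}" using maya_below[OF M, of ?s] by auto
    have bd': "bdd_above ?S" by (rule maya_bdd[OF M])
    have s1: "maya_seq M (Suc i) \<in> ?S" using int_Sup_mem(1)[OF ne' bd'] by simp
    have up: "\<And>y. y \<in> ?S \<Longrightarrow> y \<le> maya_seq M (Suc i)" using int_Sup_mem(2)[OF ne' bd'] by simp
    have "{y \<in> M. maya_seq M (Suc i) < y} = insert ?s {y \<in> M. ?s < y}"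
      using s1 si up by force
    then have "cnt M (maya_seq M (Suc i)) = Suc i"
      using ci maya_fin[OF M, of ?s] by (simp add: cnt_def)
    then have "maya_seq M (Suc i) \<in> M \<and> cnt M (maya_seq M (Suc i)) = Suc i \<and> maya_seq M (Suc i) < ?s"
      using s1 by simp
  } note step = this
  {
    case 0 show ?case using step[of 0] s0 c0 by (simp del: maya_seq.simps)
  next
    case (Suc i)
    then have A: "maya_seq M (Suc i) \<in> M \<and> cnt M (maya_seq M (Suc i)) = Suc i"
      using step[of i] by (simp del: maya_seq.simps)
    with step[of "Suc i"] show ?case by (simp del: maya_seq.simps)
  }
qed

lemma maya_seq_eq: "is_maya M \<Longrightarrow> x \<in> M \<Longrightarrow> cnt M x = i \<Longrightarrow> maya_seq M i = x"
  using maya_seq_char[of M i] cnt_inj[of M "maya_seq M i" x] by auto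

lemma maya_seq_dec: assumes M: "is_maya M" and ij: "i \<le> j"
  shows "maya_seq M j + int j \<le> maya_seq M i + int i"
  using ij proof (induction j rule: dec_induct)
  case (step j)
  then show ?case using maya_seq_char[OF M, of j] by simp
qed simp

definition lamM :: "int set \<Rightarrow> int \<Rightarrow> nat \<Rightarrow> nat list" where
  "lamM M K L = map (\<lambda>i. nat (maya_seq M i + int i - K)) [0..<L]"

lemma maya_partition_explicit:
  assumes M: "is_maya M" and ev: "\<forall>i\<ge>N0. maya_seq M i + int i = K"
  defines "L \<equiv> LEAST i. maya_seq M i + int i = K"
  shows "maya_partition M = lamM M K L"
    and "\<And>i. maya_seq M i + int i \<ge> K"
    and "\<And>i. i \<ge> L \<Longrightarrow> maya_seq M i + int i = K"
    and "\<And>i. i < L \<Longrightarrow> maya_seq M i + int i > K"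
proof -
  let ?s = "maya_seq M"
  show ge: "\<And>i. ?s i + int i \<ge> K"
  proof -
    fix i
    have "?s (max i N0) + int (max i N0) \<le> ?s i + int i" by (rule maya_seq_dec[OF M]) simp
    moreover have "?s (max i N0) + int (max i N0) = K" using ev by simp
    ultimately show "?s i + int i \<ge> K" by simp
  qed
  have LK: "?s L + int L = K" unfolding L_def by (rule LeastI[of _ N0]) (use ev in auto)
  show geL: "\<And>i. i \<ge> L \<Longrightarrow> ?s i + int i = K"
  proof -
    fix i assume "i \<ge> L"
    then have "?s i + int i \<le> ?s L + int L" by (rule maya_seq_dec[OF M])
    then show "?s i + int i = K" using LK ge[of i] by linarith
  qed
  show ltL: "\<And>i. i < L \<Longrightarrow> ?s i + int i > K"
  proof -
    fix i assume "i < L"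
    then have "?s i + int i \<noteq> K" unfolding L_def by (rule not_less_Least)
    then show "?s i + int i > K" using ge[of i] by linarith
  qed
  have part: "part (lamM M K L) i = nat (?s i + int i - K)" for i
    using geL[of i] by (auto simp: part_def lamM_def)
  have P: "is_partition (lamM M K L) \<and>
     (\<forall>i. ?s i - ?s (Suc i) = int (part (lamM M K L) i) - int (part (lamM M K L) (Suc i)) + 1)"
  proof
    show "is_partition (lamM M K L)"
      unfolding is_partition_def lamM_def
    proof
      show "sorted_wrt (\<ge>) (map (\<lambda>i. nat (?s i + int i - K)) [0..<L])"
        unfolding sorted_wrt_iff_nth_less using maya_seq_dec[OF M] by (auto intro!: nat_mono)
      show "\<forall>x\<in>set (map (\<lambda>i. nat (?s i + int i - K)) [0..<L]). 0 < x"
        using ltL by auto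
    qed
    show "\<forall>i. ?s i - ?s (Suc i) = int (part (lamM M K L) i) - int (part (lamM M K L) (Suc i)) + 1"
    proof
      fix i
      have "?s i + int i \<ge> K" "?s (Suc i) + int (Suc i) \<ge> K" using ge by blast+
      then show "?s i - ?s (Suc i) = int (part (lamM M K L) i) - int (part (lamM M K L) (Suc i)) + 1"
        unfolding part by (simp del: maya_seq.simps)
    qed
  qed
  show "maya_partition M = lamM M K L"
    unfolding maya_partition_def
  proof (rule the_equality)
    show "is_partition (lamM M K L) \<and>
     (\<forall>i. ?s i - ?s (Suc i) = int (part (lamM M K L) i) - int (part (lamM M K L) (Suc i)) + 1)"
      by (rule P)
    fix lam assume H: "is_partition lam \<and>
      (\<forall>i. ?s i - ?s (Suc i) = int (part lam i) - int (part lam (Suc i)) + 1)"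
    let ?d = "\<lambda>i. int (part lam i) - int (part (lamM M K L) i)"
    have dS: "?d (Suc i) = ?d i" for i proof -
      have "?s i - ?s (Suc i) = int (part lam i) - int (part lam (Suc i)) + 1" using H by blast
      moreover have "?s i - ?s (Suc i) = int (part (lamM M K L) i) - int (part (lamM M K L) (Suc i)) + 1" using P by blast
      ultimately show ?thesis by linarith
    qed
    have dc: "?d i = ?d 0" for i by (induction i) (use dS in auto)
    have "?d (length lam + L) = 0" by (simp add: part_def lamM_def)
    then have pe: "part lam i = part (lamM M K L) i" for i using dc[of i] dc[of "length lam + L"] by simp
    have pos: "\<And>i. i < length lam \<Longrightarrow> part lam i > 0"
      using H unfolding is_partition_def part_def by auto
    have pos2: "\<And>i. i < L \<Longrightarrow> part (lamM M K L) i > 0"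
      using ltL by (simp add: part)
    have len: "length lam = L"
    proof (rule ccontr)
      assume "length lam \<noteq> L"
      then consider "length lam < L" | "L < length lam" by linarith
      then show False
      proof cases
        case 1 then show False using pos2[of "length lam"] pe[of "length lam"] by (simp add: part_def)
      next
        case 2 then show False using pos[of L] pe[of L] by (simp add: part_def lamM_def)
      qed
    qed
    show "lam = lamM M K L"
    proof (rule nth_equalityI)
      show "length lam = length (lamM M K L)" using len by (simp add: lamM_def)
      fix i assume "i < length lam"
      then show "lam ! i = lamM M K L ! i" using pe[of i] len by (simp add: part_def lamM_def)
    qed
  qed
qed

lemma schur_maya:
  assumes M: "is_maya M" and ev: "\<forall>i\<ge>N0. maya_seq M i + int i = K"
  shows "\<exists>L. \<forall>N\<ge>L. schur (maya_partition M) = Dt (map (\<lambda>i. maya_seq M i - K) [0..<N])"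
proof -
  let ?s = "maya_seq M"
  define L where "L \<equiv> LEAST i. maya_seq M i + int i = K"
  note E = maya_partition_explicit[OF M ev, folded L_def]
  have base: "schur (maya_partition M) = Dt (map (\<lambda>i. ?s i - K) [0..<L])"
    unfolding E(1) schur_Dt
    by (rule arg_cong[where f = Dt], rule nth_equalityI) (use E(2) in \<open>auto simp: lamM_def\<close>)
  have "\<forall>N\<ge>L. schur (maya_partition M) = Dt (map (\<lambda>i. ?s i - K) [0..<N])"
  proof (intro allI impI)
    fix N assume "L \<le> N"
    then show "schur (maya_partition M) = Dt (map (\<lambda>i. ?s i - K) [0..<N])"
    proof (induction N rule: dec_induct)
      case base then show ?case using \<open>schur (maya_partition M) = _\<close> by simp
    next
      case (step N)
      have "?s N - K = - int (length (map (\<lambda>i. ?s i - K) [0..<N]))" using E(3)[of N] step by simp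
      then have "map (\<lambda>i. ?s i - K) [0..<Suc N] = map (\<lambda>i. ?s i - K) [0..<N] @ [- int (length (map (\<lambda>i. ?s i - K) [0..<N]))]"
        by simp
      then show ?case using step Dt_pad[of "map (\<lambda>i. ?s i - K) [0..<N]"] by simp
    qed
  qed
  then show ?thesis by blast
qed


lemma cnt_le: "is_maya M \<Longrightarrow> y < x \<Longrightarrow> cnt M x \<le> cnt M y"
  unfolding cnt_def by (rule card_mono[OF maya_fin]) auto

lemma maya_insert: assumes "is_maya M" shows "is_maya (insert x M)"
proof -
  obtain a b where "\<forall>k<a. k \<in> M" "\<forall>k\<in>M. k < b" using assms unfolding is_maya_def by blast
  then show ?thesis unfolding is_maya_def
    by (intro conjI exI[of _ a] exI[of _ "max b (x + 1)"]) auto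
qed

lemma maya_insert_seq:
  assumes M: "is_maya M" and x: "x \<notin> M"
  shows "i < cnt M x \<Longrightarrow> maya_seq (insert x M) i = maya_seq M i"
    and "maya_seq (insert x M) (cnt M x) = x"
    and "i \<ge> cnt M x \<Longrightarrow> maya_seq (insert x M) (Suc i) = maya_seq M i"
proof -
  let ?M = "insert x M"
  let ?p = "cnt M x"
  have M': "is_maya ?M" by (rule maya_insert[OF M])
  have gt: "cnt ?M y = cnt M y" if "x < y" for y
    unfolding cnt_def using that by (intro arg_cong[where f = card]) auto
  have lt: "cnt ?M y = Suc (cnt M y)" if "y < x" for y
  proof -
    have "{z \<in> ?M. y < z} = insert x {z \<in> M. y < z}" using that by auto
    then show ?thesis unfolding cnt_def using maya_fin[OF M, of y] x by simp
  qed
  have cx: "cnt ?M x = ?p" unfolding cnt_def by (intro arg_cong[where f = card]) auto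
  have sM: "maya_seq M i \<in> M" "cnt M (maya_seq M i) = i" for i using maya_seq_char[OF M, of i] by auto
  have big: "x < maya_seq M i" if "i < ?p" for i
  proof (rule ccontr)
    assume "\<not> x < maya_seq M i"
    then have "maya_seq M i < x" using sM(1)[of i] x by (cases "maya_seq M i = x") auto
    then have "?p \<le> i" using cnt_le[OF M, of "maya_seq M i" x] sM(2)[of i] by simp
    then show False using that by simp
  qed
  have small: "maya_seq M i < x" if "?p \<le> i" for i
  proof (rule ccontr)
    assume "\<not> maya_seq M i < x"
    then have "x < maya_seq M i" using sM(1)[of i] x by (cases "maya_seq M i = x") auto
    then have "i < ?p" using cnt_mono_strict[OF M sM(1)[of i]] sM(2)[of i] by metis
    then show False using that by simp
  qed
  show "i < ?p \<Longrightarrow> maya_seq ?M i = maya_seq M i"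
    by (rule maya_seq_eq[OF M']) (use sM gt big in auto)
  show "maya_seq ?M ?p = x"
    by (rule maya_seq_eq[OF M']) (use cx in auto)
  show "i \<ge> ?p \<Longrightarrow> maya_seq ?M (Suc i) = maya_seq M i"
    by (rule maya_seq_eq[OF M']) (use sM lt small in auto)
qed

lemma maya_shift:
  assumes M: "is_maya M"
  shows "is_maya ((\<lambda>k. k + c) ` M)" and "maya_seq ((\<lambda>k. k + c) ` M) i = maya_seq M i + c"
proof -
  let ?M = "(\<lambda>k. k + c) ` M"
  obtain a b where ab: "\<forall>k<a. k \<in> M" "\<forall>k\<in>M. k < b" using M unfolding is_maya_def by blast
  have "\<forall>k<a + c. k \<in> ?M"
  proof (intro allI impI)
    fix k assume "k < a + c"
    then have "k - c \<in> M" using ab by simp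
    then show "k \<in> ?M" by (intro image_eqI[of _ _ "k - c"]) auto
  qed
  then show M': "is_maya ?M" unfolding is_maya_def
  proof (intro conjI)
    show "\<exists>b. \<forall>k\<in>?M. k < b" using ab by (intro exI[of _ "b + c"]) auto
  qed blast
  have "{z \<in> ?M. maya_seq M i + c < z} = (\<lambda>k. k + c) ` {z \<in> M. maya_seq M i < z}" by auto
  then have "cnt ?M (maya_seq M i + c) = cnt M (maya_seq M i)"
    unfolding cnt_def by (simp add: card_image)
  then show "maya_seq ?M i = maya_seq M i + c"
    using maya_seq_char[OF M, of i] by (intro maya_seq_eq[OF M']) auto
qed

lemma maya_partition_shift:
  assumes M: "is_maya M" shows "maya_partition ((\<lambda>k. k + c) ` M) = maya_partition M"
  unfolding maya_partition_def maya_shift(2)[OF M] by simp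

lemma maya_eventual:
  assumes M: "is_maya M" and a: "\<forall>k<a. k \<in> M"
  shows "\<forall>i\<ge>cnt M (a - 1). maya_seq M i + int i = a - 1 + int (cnt M (a - 1))"
proof (intro allI impI)
  fix i assume i: "cnt M (a - 1) \<le> i"
  define C where "C = cnt M (a - 1)"
  define j where "j = i - C"
  have ij: "i = C + j" using i by (simp add: C_def j_def)
  have "{z \<in> M. a - 1 - int j < z} = {z \<in> M. a - 1 < z} \<union> {a - 1 - int j<..a - 1}"
    using a by auto
  moreover have "card ({z \<in> M. a - 1 < z} \<union> {a - 1 - int j<..a - 1}) = C + j"
    by (subst card_Un_disjoint) (auto simp: C_def cnt_def maya_fin[OF M])
  ultimately have "cnt M (a - 1 - int j) = i" unfolding cnt_def ij by simp
  then have "maya_seq M i = a - 1 - int j" by (intro maya_seq_eq[OF M]) (use a in auto)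
  then show "maya_seq M i + int i = a - 1 + int C" using ij by simp
qed

theorem maya_vertex:
  assumes M: "is_maya M" and x: "x \<notin> M" and a: "\<forall>k<a. k \<in> M"
  shows "\<exists>s\<in>{1, -1::complex}. vertexX (x - (a - 1 + int (cnt M (a - 1))) - 1) (schur (maya_partition M))
            = (\<lambda>t. s * schur (maya_partition (insert x M)) t)"
proof -
  define C where "C = cnt M (a - 1)"
  define K where "K = a - 1 + int C"
  define p where "p = cnt M x"
  let ?M = "insert x M"
  let ?s = "maya_seq M"
  let ?s' = "maya_seq ?M"
  have M': "is_maya ?M" by (rule maya_insert[OF M])
  have evM: "\<forall>i\<ge>C. ?s i + int i = K" using maya_eventual[OF M a] by (simp add: C_def K_def)
  have evM': "\<forall>i\<ge>Suc (max C p). ?s' i + int i = K + 1"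
  proof (intro allI impI)
    fix i assume "Suc (max C p) \<le> i"
    then obtain i' where i': "i = Suc i'" "i' \<ge> C" "i' \<ge> p" by (cases i) auto
    then have "?s' i = ?s i'" using maya_insert_seq(3)[OF M x, of i'] by (simp add: p_def)
    then show "?s' i + int i = K + 1" using evM i' by simp
  qed
  obtain L where L: "\<forall>N\<ge>L. schur (maya_partition M) = Dt (map (\<lambda>i. ?s i - K) [0..<N])"
    using schur_maya[OF M evM] by blast
  obtain L' where L': "\<forall>N\<ge>L'. schur (maya_partition ?M) = Dt (map (\<lambda>i. ?s' i - (K + 1)) [0..<N])"
    using schur_maya[OF M' evM'] by blast
  define N where "N = L + L' + p"
  let ?g = "\<lambda>i. ?s i - (K + 1)"
  have "vertexX (x - K - 1) (schur (maya_partition M)) = vertexX (x - K - 1) (Dt (map (\<lambda>i. ?s i - K) [0..<N]))"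
    using L[rule_format, of N] by (simp add: N_def)
  also have "\<dots> = Dt ((x - K - 1) # map (\<lambda>y. y - 1) (map (\<lambda>i. ?s i - K) [0..<N]))"
    by (rule vertex_Dt)
  also have "(x - K - 1) # map (\<lambda>y. y - 1) (map (\<lambda>i. ?s i - K) [0..<N])
      = (x - (K + 1)) # map ?g [0..<p] @ map ?g [p..<N]"
  proof -
    have "[0..<N] = [0..<p] @ [p..<N]" using upt_add_eq_append[of 0 p "L + L'"] by (simp add: N_def add.commute)
    then show ?thesis by (simp add: algebra_simps)
  qed
  finally have V: "vertexX (x - K - 1) (schur (maya_partition M)) t
      = (-1) ^ p * Dt ([] @ map ?g [0..<p] @ (x - (K + 1)) # map ?g [p..<N]) t" for t
    using Dt_rotate[of "[]" "x - (K + 1)" "map ?g [0..<p]" "map ?g [p..<N]" t] by simp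
  have list: "map ?g [0..<p] @ (x - (K + 1)) # map ?g [p..<N] = map (\<lambda>i. ?s' i - (K + 1)) [0..<Suc N]"
  proof (rule nth_equalityI)
    show "length (map ?g [0..<p] @ (x - (K + 1)) # map ?g [p..<N]) = length (map (\<lambda>i. ?s' i - (K + 1)) [0..<Suc N])"
      by (simp add: N_def)
    fix j assume j: "j < length (map ?g [0..<p] @ (x - (K + 1)) # map ?g [p..<N])"
    then have jN: "j < Suc N" by (simp add: N_def)
    consider "j < p" | "j = p" | "p < j" by linarith
    then show "(map ?g [0..<p] @ (x - (K + 1)) # map ?g [p..<N]) ! j = map (\<lambda>i. ?s' i - (K + 1)) [0..<Suc N] ! j"
    proof cases
      case 1 then show ?thesis using jN maya_insert_seq(1)[OF M x, of j]
        by (simp add: nth_append p_def del: upt_Suc)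
    next
      case 2 then show ?thesis using jN maya_insert_seq(2)[OF M x]
        by (simp add: nth_append p_def del: upt_Suc)
    next
      case 3
      then obtain j' where j': "j = Suc j'" "p \<le> j'" by (cases j) auto
      then show ?thesis using jN maya_insert_seq(3)[OF M x, of j']
        by (simp add: nth_append p_def nth_Cons' del: upt_Suc)
    qed
  qed
  have "vertexX (x - K - 1) (schur (maya_partition M)) = (\<lambda>t. (-1) ^ p * schur (maya_partition ?M) t)"
  proof
    fix t
    show "vertexX (x - K - 1) (schur (maya_partition M)) t = (-1) ^ p * schur (maya_partition ?M) t"
      using V[of t] list L'[rule_format, of "Suc N"] by (simp add: N_def)
  qed
  moreover have "(-1) ^ p \<in> {1, -1::complex}" by (cases "even p") auto
  ultimately show ?thesis unfolding K_def C_def by (metis diff_diff_eq)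
qed


lemma Mmn_iff: "y \<in> Mmn m n \<longleftrightarrow>
   (y mod 3 = 0 \<and> y div 3 < m) \<or> (y mod 3 = 1 \<and> y div 3 < n) \<or> (y mod 3 = 2 \<and> y div 3 < 0)"
proof
  assume "y \<in> Mmn m n"
  then show "(y mod 3 = 0 \<and> y div 3 < m) \<or> (y mod 3 = 1 \<and> y div 3 < n) \<or> (y mod 3 = 2 \<and> y div 3 < 0)"
    unfolding Mmn_def Dl_def by auto
next
  assume H: "(y mod 3 = 0 \<and> y div 3 < m) \<or> (y mod 3 = 1 \<and> y div 3 < n) \<or> (y mod 3 = 2 \<and> y div 3 < 0)"
  have y: "y = 3 * (y div 3) + y mod 3" by simp
  from H show "y \<in> Mmn m n"
  proof (elim disjE conjE)
    assume "y mod 3 = 0" "y div 3 < m"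
    then show "y \<in> Mmn m n" unfolding Mmn_def Dl_def using y by (intro UnI1 UnI1 image_eqI[of _ _ "y div 3"]) auto
  next
    assume "y mod 3 = 1" "y div 3 < n"
    then show "y \<in> Mmn m n" unfolding Mmn_def Dl_def using y by (intro UnI1 UnI2 image_eqI[of _ _ "y div 3"]) auto
  next
    assume "y mod 3 = 2" "y div 3 < 0"
    then show "y \<in> Mmn m n" unfolding Mmn_def Dl_def using y by (intro UnI2 image_eqI[of _ _ "y div 3"]) auto
  qed
qed

lemma Mmn_low: "k < 3 * min m (min n 0) \<Longrightarrow> k \<in> Mmn m n"
  unfolding Mmn_iff by presburger

lemma Mmn_maya: "is_maya (Mmn m n)"
  unfolding is_maya_def
proof (intro conjI)
  show "\<exists>a. \<forall>k<a. k \<in> Mmn m n" using Mmn_low by blast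
  show "\<exists>b. \<forall>k\<in>Mmn m n. k < b"
  proof (intro exI[of _ "3 * max m (max n 0) + 3"] ballI)
    fix k assume "k \<in> Mmn m n"
    then have "k div 3 < max m (max n 0)" by (auto simp: Mmn_iff)
    then show "k < 3 * max m (max n 0) + 3" by presburger
  qed
qed

lemma Mmn_cnt:
  fixes m n :: int
  defines "\<mu> \<equiv> min m (min n 0)"
  shows "int (cnt (Mmn m n) (3 * \<mu> - 1)) = m + n - 3 * \<mu>"
proof -
  have eq: "{y \<in> Mmn m n. 3 * \<mu> - 1 < y} =
     ((\<lambda>k. 3 * k) ` {\<mu>..<m} \<union> (\<lambda>k. 3 * k + 1) ` {\<mu>..<n}) \<union> (\<lambda>k. 3 * k + 2) ` {\<mu>..<0}"
    unfolding Mmn_def Dl_def by auto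
  have i1: "inj_on (\<lambda>k::int. 3 * k) A" for A by (auto intro: inj_onI)
  have i2: "inj_on (\<lambda>k::int. 3 * k + 1) A" for A by (auto intro: inj_onI)
  have i3: "inj_on (\<lambda>k::int. 3 * k + 2) A" for A by (auto intro: inj_onI)
  have d1: "(\<lambda>k. 3 * k) ` {\<mu>..<m} \<inter> (\<lambda>k. 3 * k + 1) ` {\<mu>..<n} = {}" by auto presburger
  have d2: "((\<lambda>k. 3 * k) ` {\<mu>..<m} \<union> (\<lambda>k. 3 * k + 1) ` {\<mu>..<n}) \<inter> (\<lambda>k. 3 * k + 2) ` {\<mu>..<0} = {}"
    by auto presburger+
  have "cnt (Mmn m n) (3 * \<mu> - 1) = nat (m - \<mu>) + nat (n - \<mu>) + nat (0 - \<mu>)"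
    unfolding cnt_def eq
    by (simp add: card_Un_disjoint d1 d2 card_image i1 i2 i3)
  moreover have "\<mu> \<le> m" "\<mu> \<le> n" "\<mu> \<le> 0" by (auto simp: \<mu>_def)
  ultimately show ?thesis by simp
qed

lemma Mmn_vertex:
  assumes "x \<notin> Mmn m n"
  shows "\<exists>s\<in>{1, -1::complex}. vertexX (x - m - n) (schur (lam_mn m n))
      = (\<lambda>t. s * schur (maya_partition (insert x (Mmn m n))) t)"
proof -
  let ?a = "3 * min m (min n 0)"
  have "\<forall>k<?a. k \<in> Mmn m n" using Mmn_low by blast
  from maya_vertex[OF Mmn_maya assms this]
  have "\<exists>s\<in>{1, -1::complex}. vertexX (x - (?a - 1 + int (cnt (Mmn m n) (?a - 1))) - 1) (schur (maya_partition (Mmn m n)))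
            = (\<lambda>t. s * schur (maya_partition (insert x (Mmn m n))) t)" .
  moreover have "x - (?a - 1 + int (cnt (Mmn m n) (?a - 1))) - 1 = x - m - n"
    using Mmn_cnt[of m n] by simp
  ultimately show ?thesis by (simp add: lam_mn_def)
qed

lemma ins_m: "insert (3 * m) (Mmn m n) = Mmn (m + 1) n"
  by (auto simp: Mmn_iff)

lemma ins_n: "insert (3 * n + 1) (Mmn m n) = Mmn m (n + 1)"
  by (auto simp: Mmn_iff) presburger+

lemma notin_m: "3 * m \<notin> Mmn m n" by (simp add: Mmn_iff)
lemma notin_n: "3 * n + 1 \<notin> Mmn m n" by (simp add: Mmn_iff)
lemma notin_2: "2 \<notin> Mmn m n" by (simp add: Mmn_iff)

lemma ins_2: "insert 2 (Mmn (m + 1) (n + 1)) = (\<lambda>k. k + 3) ` Mmn m n"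
proof -
  have "y \<in> (\<lambda>k. k + 3) ` Mmn m n \<longleftrightarrow> y - 3 \<in> Mmn m n" for y
    by (auto intro: image_eqI[of _ _ "y - 3"])
  then show ?thesis by (auto simp: Mmn_iff) presburger+
qed


theorem lemma5p4:
  fixes m n :: int
  shows "(\<exists>s\<in>{1, -1::complex}. vertexX (2*m - n) (schur (lam_mn m n))
            = (\<lambda>t. s * schur (lam_mn (m+1) n) t))
       \<and> (\<exists>s\<in>{1, -1::complex}. vertexX (2*n - m) (schur (lam_mn (m+1) n))
            = (\<lambda>t. s * schur (lam_mn (m+1) (n+1)) t))
       \<and> (\<exists>s\<in>{1, -1::complex}. vertexX (-m - n) (schur (lam_mn (m+1) (n+1)))
            = (\<lambda>t. s * schur (lam_mn m n) t))
       \<and> (\<exists>s\<in>{1, -1::complex}. vertexX (2*n - m + 1) (schur (lam_mn m n))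
            = (\<lambda>t. s * schur (lam_mn m (n+1)) t))
       \<and> (\<exists>s\<in>{1, -1::complex}. vertexX (2*m - n - 1) (schur (lam_mn m (n+1)))
            = (\<lambda>t. s * schur (lam_mn (m+1) (n+1)) t))
       \<and> (\<exists>s\<in>{1, -1::complex}. vertexX (-m - n) (schur (lam_mn (m+1) (n+1)))
            = (\<lambda>t. s * schur (lam_mn m n) t))"
proof -
  have q1: "3 * m - m - n = 2 * m - n" by simp
  have e1: "\<exists>s\<in>{1, -1::complex}. vertexX (2*m - n) (schur (lam_mn m n))
            = (\<lambda>t. s * schur (lam_mn (m+1) n) t)"
    using Mmn_vertex[OF notin_m[of m n]] unfolding q1 ins_m lam_mn_def .
  have q2: "3 * n + 1 - (m + 1) - n = 2 * n - m" by simp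
  have e2: "\<exists>s\<in>{1, -1::complex}. vertexX (2*n - m) (schur (lam_mn (m+1) n))
            = (\<lambda>t. s * schur (lam_mn (m+1) (n+1)) t)"
    using Mmn_vertex[OF notin_n[of n "m + 1"]] unfolding q2 ins_n lam_mn_def .
  have q3: "2 - (m + 1) - (n + 1) = - m - n" by simp
  have e3: "\<exists>s\<in>{1, -1::complex}. vertexX (-m - n) (schur (lam_mn (m+1) (n+1)))
            = (\<lambda>t. s * schur (lam_mn m n) t)"
    using Mmn_vertex[OF notin_2[of "m + 1" "n + 1"]]
    unfolding q3 ins_2 lam_mn_def maya_partition_shift[OF Mmn_maya] .
  have q4: "3 * n + 1 - m - n = 2 * n - m + 1" by simp
  have e4: "\<exists>s\<in>{1, -1::complex}. vertexX (2*n - m + 1) (schur (lam_mn m n))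
            = (\<lambda>t. s * schur (lam_mn m (n+1)) t)"
    using Mmn_vertex[OF notin_n[of n m]] unfolding q4 ins_n lam_mn_def .
  have q5: "3 * m - m - (n + 1) = 2 * m - n - 1" by simp
  have e5: "\<exists>s\<in>{1, -1::complex}. vertexX (2*m - n - 1) (schur (lam_mn m (n+1)))
            = (\<lambda>t. s * schur (lam_mn (m+1) (n+1)) t)"
    using Mmn_vertex[OF notin_m[of m "n + 1"]] unfolding q5 ins_m lam_mn_def .
  show ?thesis using e1 e2 e3 e4 e5 by blast
qed

end
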